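(* Consider $\tau=t$ on Minkowski space $\mathbb{M}^{n+1}=(\mathbb{R}\times\mathbb{R}^n,-dt^2+(dx^1)^2+\dots+(dx^n)^2)$, and write $p=(t_p,p_S)$ with $p_S\in\mathbb{R}^n$. Then: (1) $\hat{d}_t$ is a definite, translation invariant metric on $\mathbb{M}^{n+1}$, with $\hat{d}_t(p,q)=|t(q)-t(p)|$ if $q\in J^+(p)\cup J^-(p)$, and $\hat{d}_t(p,q)=\|q_S-p_S\|$ if $q\notin J^+(p)\cup J^-(p)$, where $\|\cdot\|$ is the Euclidean norm; (2) for all $p,q$: $p\le q \iff \hat{d}_t(p,q)=t(q)-t(p)$; (3) the $\hat{d}_t$-spheres are coordinate cylinders; for example, the null distance sphere of radius $r$ about the origin is $\{(t,x):\max\{|t|,\|x\|\}=r\}$.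
   Context: Minkowski space is time-oriented by $\partial_t$. Piecewise smooth curves are future (past) causal if all tangents, including one-sided ones, are future (past) pointing causal vectors; constant curves count as causal. $J^+(p)$ ($J^-(p)$) is the set of points reachable from $p$ by a future (past) causal curve, and $p\le q$ means $q\in J^+(p)$. For a function $\tau$ strictly increasing along future causal curves, a piecewise causal curve $\beta:[a,b]\to M$ has a partition $a=s_0<\dots<s_k=b$ with each restriction a smooth future or past causal curve; its null length is $\hat{L}_\tau(\beta)=\sum_i|\tau(\beta(s_i))-\tau(\beta(s_{i-1}))|$, and $\hat{d}_\tau(p,q)=\inf\{\hat{L}_\tau(\beta):\beta$ piecewise causal from $p$ to $q\}$. *)

theory Defs
  imports "HOL-Analysis.Analysis"
begin

text \<open>Points of Minkowski space M^(n+1) = R x R^n, written p = (t_p, p_S).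
  The spatial dimension n is the cardinality of the finite index type 'n.\<close>
type_synonym 'n mpoint = "real \<times> (real ^ 'n)"

definition mink_g :: "'n::finite mpoint \<Rightarrow> 'n mpoint \<Rightarrow> real" where
  "mink_g v w = - (fst v * fst w) + snd v \<bullet> snd w"

text \<open>Causal vectors: nonzero with g(v,v) <= 0; time orientation by d/dt:
  future pointing iff g(v, d/dt) < 0, i.e. fst v > 0.\<close>
definition causal_vec :: "'n::finite mpoint \<Rightarrow> bool" where
  "causal_vec v \<longleftrightarrow> v \<noteq> 0 \<and> mink_g v v \<le> 0"

definition future_causal_vec :: "'n::finite mpoint \<Rightarrow> bool" where
  "future_causal_vec v \<longleftrightarrow> causal_vec v \<and> mink_g v (1, 0) < 0"

definition past_causal_vec :: "'n::finite mpoint \<Rightarrow> bool" where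
  "past_causal_vec v \<longleftrightarrow> causal_vec v \<and> mink_g v (1, 0) > 0"

definition smooth_on_ivl :: "real \<Rightarrow> real \<Rightarrow> (real \<Rightarrow> 'a::real_normed_vector) \<Rightarrow> bool" where
  "smooth_on_ivl a b \<beta> \<longleftrightarrow>
     (\<exists>D. D 0 = \<beta> \<and>
        (\<forall>k. \<forall>x\<in>{a..b}. (D k has_vector_derivative D (Suc k) x) (at x within {a..b})))"

definition smooth_curve_with :: "('n::finite mpoint \<Rightarrow> bool) \<Rightarrow> real \<Rightarrow> real \<Rightarrow> (real \<Rightarrow> 'n mpoint) \<Rightarrow> bool" where
  "smooth_curve_with P a b \<beta> \<longleftrightarrow> a < b \<and> smooth_on_ivl a b \<beta> \<and>
     ((\<forall>x\<in>{a..b}. \<beta> x = \<beta> a) \<or>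
      (\<forall>x\<in>{a..b}. \<forall>v. (\<beta> has_vector_derivative v) (at x within {a..b}) \<longrightarrow> P v))"

definition is_partition :: "real \<Rightarrow> real \<Rightarrow> (nat \<Rightarrow> real) \<Rightarrow> nat \<Rightarrow> bool" where
  "is_partition a b s k \<longleftrightarrow> 0 < k \<and> s 0 = a \<and> s k = b \<and> (\<forall>i<k. s i < s (Suc i))"

definition future_causal_curve :: "real \<Rightarrow> real \<Rightarrow> (real \<Rightarrow> 'n::finite mpoint) \<Rightarrow> (nat \<Rightarrow> real) \<Rightarrow> nat \<Rightarrow> bool" where
  "future_causal_curve a b \<beta> s k \<longleftrightarrow> is_partition a b s k \<and>
     (\<forall>i<k. smooth_curve_with future_causal_vec (s i) (s (Suc i)) \<beta>)"

definition past_causal_curve :: "real \<Rightarrow> real \<Rightarrow> (real \<Rightarrow> 'n::finite mpoint) \<Rightarrow> (nat \<Rightarrow> real) \<Rightarrow> nat \<Rightarrow> bool" where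
  "past_causal_curve a b \<beta> s k \<longleftrightarrow> is_partition a b s k \<and>
     (\<forall>i<k. smooth_curve_with past_causal_vec (s i) (s (Suc i)) \<beta>)"

definition piecewise_causal :: "real \<Rightarrow> real \<Rightarrow> (real \<Rightarrow> 'n::finite mpoint) \<Rightarrow> (nat \<Rightarrow> real) \<Rightarrow> nat \<Rightarrow> bool" where
  "piecewise_causal a b \<beta> s k \<longleftrightarrow> is_partition a b s k \<and>
     (\<forall>i<k. smooth_curve_with future_causal_vec (s i) (s (Suc i)) \<beta>
           \<or> smooth_curve_with past_causal_vec (s i) (s (Suc i)) \<beta>)"

definition J_plus :: "'n::finite mpoint \<Rightarrow> 'n mpoint set" where
  "J_plus p = {q. \<exists>a b \<beta> s k. future_causal_curve a b \<beta> s k \<and> \<beta> a = p \<and> \<beta> b = q}"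

definition J_minus :: "'n::finite mpoint \<Rightarrow> 'n mpoint set" where
  "J_minus p = {q. \<exists>a b \<beta> s k. past_causal_curve a b \<beta> s k \<and> \<beta> a = p \<and> \<beta> b = q}"

definition causal_le :: "'n::finite mpoint \<Rightarrow> 'n mpoint \<Rightarrow> bool" where
  "causal_le p q \<longleftrightarrow> q \<in> J_plus p"

definition null_length :: "('n::finite mpoint \<Rightarrow> real) \<Rightarrow> (real \<Rightarrow> 'n mpoint) \<Rightarrow> (nat \<Rightarrow> real) \<Rightarrow> nat \<Rightarrow> real" where
  "null_length \<tau> \<beta> s k = (\<Sum>i<k. \<bar>\<tau> (\<beta> (s (Suc i))) - \<tau> (\<beta> (s i))\<bar>)"

definition null_dist :: "('n::finite mpoint \<Rightarrow> real) \<Rightarrow> 'n mpoint \<Rightarrow> 'n mpoint \<Rightarrow> real" where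
  "null_dist \<tau> p q = Inf {null_length \<tau> \<beta> s k | a b \<beta> s k.
       piecewise_causal a b \<beta> s k \<and> \<beta> a = p \<and> \<beta> b = q}"

end

theory Submission
  imports Defs
begin

lemma mono_vd:
  fixes g :: "real \<Rightarrow> real"
  assumes ab: "a < b"
    and d: "\<And>x. x \<in> {a..b} \<Longrightarrow> (g has_vector_derivative g' x) (at x within {a..b})"
    and nn: "\<And>x. x \<in> {a..b} \<Longrightarrow> g' x \<ge> 0"
  shows "g a \<le> g b"
proof (rule DERIV_nonneg_imp_increasing_open[of a b g])
  show "a \<le> b" using ab by simp
  fix x assume x: "a < x" "x < b"
  then have "(g has_vector_derivative g' x) (at x)"
    using d[of x] at_within_Icc_at[of a x b] by simp
  thus "\<exists>y. DERIV g x :> y \<and> y \<ge> 0" using nn[of x] x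
    by (auto simp: has_real_derivative_iff_has_vector_derivative)
next
  show "continuous_on {a..b} g"
    by (rule continuous_on_vector_derivative) (use d in auto)
qed

lemma piece_bound:
  fixes \<beta> :: "real \<Rightarrow> 'n::finite mpoint"
  assumes ab: "a < b"
    and d: "\<And>x. x \<in> {a..b} \<Longrightarrow> (\<beta> has_vector_derivative V x) (at x within {a..b})"
    and c: "\<And>x. x \<in> {a..b} \<Longrightarrow> norm (snd (V x)) \<le> \<sigma> * fst (V x)"
  shows "norm (snd (\<beta> b) - snd (\<beta> a)) \<le> \<sigma> * (fst (\<beta> b) - fst (\<beta> a))"
proof -
  define w where "w = snd (\<beta> b) - snd (\<beta> a)"
  define u where "u = (if w = 0 then 0 else (1/norm w) *\<^sub>R w)"
  have nu: "norm u \<le> 1"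
  proof (cases "w = 0")
    case False
    then have "norm u = (1/norm w) * norm w" unfolding u_def using False by simp
    then show ?thesis using False by simp
  qed (simp add: u_def)
  have uw: "u \<bullet> w = norm w"
    by (simp add: u_def inner_scaleR_left dot_square_norm power2_eq_square)
  define cc where "cc = (\<sigma>, -u)"
  have cb: "\<And>z. cc \<bullet> z = \<sigma> * fst z - u \<bullet> snd z"
    by (simp add: cc_def inner_Pair_0 inner_prod_def)
  have "cc \<bullet> \<beta> a \<le> cc \<bullet> \<beta> b"
  proof (rule mono_vd[OF ab, where g' = "\<lambda>x. cc \<bullet> V x"])
    fix x assume x: "x \<in> {a..b}"
    show "((\<lambda>s. cc \<bullet> \<beta> s) has_vector_derivative cc \<bullet> V x) (at x within {a..b})"
      by (rule bounded_linear.has_vector_derivative[OF bounded_linear_inner_right d[OF x]])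
    have "u \<bullet> snd (V x) \<le> norm u * norm (snd (V x))" by (rule norm_cauchy_schwarz)
    also have "\<dots> \<le> norm (snd (V x))" using nu by (simp add: mult_left_le_one_le)
    finally show "0 \<le> cc \<bullet> V x" using c[OF x] cb[of "V x"] by simp
  qed
  then show ?thesis using uw cb[of "\<beta> a"] cb[of "\<beta> b"]
    by (simp add: w_def inner_diff_right algebra_simps)
qed


lemma mink_self: "mink_g v v = - (fst v)\<^sup>2 + (norm (snd v))\<^sup>2"
  unfolding mink_g_def power2_norm_eq_inner by (simp add: power2_eq_square)

lemma mink_10: "mink_g v (1, 0) = - fst v"
  by (simp add: mink_g_def)

lemma fut_iff: "future_causal_vec (v::'n::finite mpoint) \<longleftrightarrow> norm (snd v) \<le> fst v \<and> 0 < fst v"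
proof
  assume h: "future_causal_vec v"
  then have "(norm (snd v))\<^sup>2 \<le> (fst v)\<^sup>2" "0 < fst v"
    by (auto simp: future_causal_vec_def causal_vec_def mink_self mink_10)
  then show "norm (snd v) \<le> fst v \<and> 0 < fst v"
    using power2_le_imp_le[of "norm (snd v)" "fst v"] by auto
next
  assume h: "norm (snd v) \<le> fst v \<and> 0 < fst v"
  then have "(norm (snd v))\<^sup>2 \<le> (fst v)\<^sup>2" by (simp add: power_mono)
  moreover have "v \<noteq> 0" using h by auto
  ultimately show "future_causal_vec v" using h
    by (auto simp: future_causal_vec_def causal_vec_def mink_self mink_10)
qed

lemma past_iff: "past_causal_vec (v::'n::finite mpoint) \<longleftrightarrow> norm (snd v) \<le> - fst v \<and> fst v < 0"
proof
  assume h: "past_causal_vec v"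
  then have "(norm (snd v))\<^sup>2 \<le> (- fst v)\<^sup>2" "fst v < 0"
    by (auto simp: past_causal_vec_def causal_vec_def mink_self mink_10)
  then show "norm (snd v) \<le> - fst v \<and> fst v < 0"
    using power2_le_imp_le[of "norm (snd v)" "- fst v"] by auto
next
  assume h: "norm (snd v) \<le> - fst v \<and> fst v < 0"
  then have "(norm (snd v))\<^sup>2 \<le> (- fst v)\<^sup>2" using power_mono[of "norm (snd v)" "- fst v" 2] by simp
  moreover have "v \<noteq> 0" using h by auto
  ultimately show "past_causal_vec v" using h
    by (auto simp: past_causal_vec_def causal_vec_def mink_self mink_10)
qed

lemma curve_bound:
  fixes \<beta> :: "real \<Rightarrow> 'n::finite mpoint"
  assumes sc: "smooth_curve_with P a b \<beta>"
    and P: "\<And>v. P v \<Longrightarrow> norm (snd v) \<le> \<sigma> * fst v"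
  shows "norm (snd (\<beta> b) - snd (\<beta> a)) \<le> \<sigma> * (fst (\<beta> b) - fst (\<beta> a))"
proof -
  from sc have ab: "a < b" and sm: "smooth_on_ivl a b \<beta>"
    and cs: "(\<forall>x\<in>{a..b}. \<beta> x = \<beta> a) \<or>
      (\<forall>x\<in>{a..b}. \<forall>v. (\<beta> has_vector_derivative v) (at x within {a..b}) \<longrightarrow> P v)"
    by (auto simp: smooth_curve_with_def)
  from sm obtain D where D0: "D 0 = \<beta>"
    and DD: "\<And>k x. x \<in> {a..b} \<Longrightarrow> (D k has_vector_derivative D (Suc k) x) (at x within {a..b})"
    by (auto simp: smooth_on_ivl_def)
  have d: "\<And>x. x \<in> {a..b} \<Longrightarrow> (\<beta> has_vector_derivative D 1 x) (at x within {a..b})"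
    using DD[of _ 0] D0 by simp
  from cs show ?thesis
  proof
    assume "\<forall>x\<in>{a..b}. \<beta> x = \<beta> a"
    moreover have "b \<in> {a..b}" using ab by simp
    ultimately have "\<beta> b = \<beta> a" by (rule bspec)
    then show ?thesis by simp
  next
    assume h: "\<forall>x\<in>{a..b}. \<forall>v. (\<beta> has_vector_derivative v) (at x within {a..b}) \<longrightarrow> P v"
    have "\<And>x. x \<in> {a..b} \<Longrightarrow> P (D 1 x)" using h d by blast
    then have "\<And>x. x \<in> {a..b} \<Longrightarrow> norm (snd (D 1 x)) \<le> \<sigma> * fst (D 1 x)" using P by blast
    then show ?thesis
      using piece_bound[OF ab d, of \<sigma>] by blast
  qed
qed

lemma fut_piece:
  "smooth_curve_with future_causal_vec a b (\<beta> :: real \<Rightarrow> 'n::finite mpoint) \<Longrightarrow>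
    norm (snd (\<beta> b) - snd (\<beta> a)) \<le> fst (\<beta> b) - fst (\<beta> a)"
  using curve_bound[of future_causal_vec a b \<beta> 1] by (simp add: fut_iff)

lemma past_piece:
  "smooth_curve_with past_causal_vec a b (\<beta> :: real \<Rightarrow> 'n::finite mpoint) \<Longrightarrow>
    norm (snd (\<beta> b) - snd (\<beta> a)) \<le> - (fst (\<beta> b) - fst (\<beta> a))"
  using curve_bound[of past_causal_vec a b \<beta> "-1"] by (simp add: past_iff)

lemma telescope_norm:
  fixes f :: "nat \<Rightarrow> 'a::real_normed_vector" and g :: "nat \<Rightarrow> real"
  assumes "\<And>i. i < k \<Longrightarrow> norm (f (Suc i) - f i) \<le> g i"
  shows "norm (f k - f 0) \<le> (\<Sum>i<k. g i)"
proof -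
  have "norm (f k - f 0) = norm (\<Sum>i<k. f (Suc i) - f i)"
    by (simp add: sum_lessThan_telescope)
  also have "\<dots> \<le> (\<Sum>i<k. norm (f (Suc i) - f i))" by (rule norm_sum)
  also have "\<dots> \<le> (\<Sum>i<k. g i)" by (rule sum_mono) (use assms in auto)
  finally show ?thesis .
qed

lemma pw_bound:
  fixes \<beta> :: "real \<Rightarrow> 'n::finite mpoint"
  assumes "piecewise_causal a b \<beta> s k"
  shows "norm (snd (\<beta> b) - snd (\<beta> a)) \<le> null_length fst \<beta> s k"
    and "\<bar>fst (\<beta> b) - fst (\<beta> a)\<bar> \<le> null_length fst \<beta> s k"
proof -
  have p: "is_partition a b s k" using assms by (simp add: piecewise_causal_def)
  then have sa: "s 0 = a" and sb: "s k = b" by (auto simp: is_partition_def)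
  have pc: "\<And>i. i < k \<Longrightarrow> norm (snd (\<beta> (s (Suc i))) - snd (\<beta> (s i)))
      \<le> \<bar>fst (\<beta> (s (Suc i))) - fst (\<beta> (s i))\<bar>"
  proof -
    fix i assume "i < k"
    then have "smooth_curve_with future_causal_vec (s i) (s (Suc i)) \<beta>
           \<or> smooth_curve_with past_causal_vec (s i) (s (Suc i)) \<beta>"
      using assms by (simp add: piecewise_causal_def)
    then show "norm (snd (\<beta> (s (Suc i))) - snd (\<beta> (s i)))
      \<le> \<bar>fst (\<beta> (s (Suc i))) - fst (\<beta> (s i))\<bar>"
      using fut_piece past_piece by fastforce
  qed
  show "norm (snd (\<beta> b) - snd (\<beta> a)) \<le> null_length fst \<beta> s k"
    using telescope_norm[of k "\<lambda>i. snd (\<beta> (s i))", OF pc] sa sb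
    by (simp add: null_length_def)
  show "\<bar>fst (\<beta> b) - fst (\<beta> a)\<bar> \<le> null_length fst \<beta> s k"
    using telescope_norm[of k "\<lambda>i. fst (\<beta> (s i))"] sa sb
    by (simp add: null_length_def)
qed

lemma fut_curve_bound:
  fixes \<beta> :: "real \<Rightarrow> 'n::finite mpoint"
  assumes "future_causal_curve a b \<beta> s k"
  shows "norm (snd (\<beta> b) - snd (\<beta> a)) \<le> fst (\<beta> b) - fst (\<beta> a)"
proof -
  have p: "is_partition a b s k" using assms by (simp add: future_causal_curve_def)
  then have sa: "s 0 = a" and sb: "s k = b" by (auto simp: is_partition_def)
  have "norm (snd (\<beta> (s k)) - snd (\<beta> (s 0))) \<le> (\<Sum>i<k. fst (\<beta> (s (Suc i))) - fst (\<beta> (s i)))"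
    by (rule telescope_norm) (use assms fut_piece in \<open>auto simp: future_causal_curve_def\<close>)
  then show ?thesis using sa sb sum_lessThan_telescope[of "\<lambda>i. fst (\<beta> (s i))" k] by simp
qed

lemma past_curve_bound:
  fixes \<beta> :: "real \<Rightarrow> 'n::finite mpoint"
  assumes "past_causal_curve a b \<beta> s k"
  shows "norm (snd (\<beta> b) - snd (\<beta> a)) \<le> - (fst (\<beta> b) - fst (\<beta> a))"
proof -
  have p: "is_partition a b s k" using assms by (simp add: past_causal_curve_def)
  then have sa: "s 0 = a" and sb: "s k = b" by (auto simp: is_partition_def)
  have "norm (snd (\<beta> (s k)) - snd (\<beta> (s 0))) \<le> (\<Sum>i<k. fst (\<beta> (s i)) - fst (\<beta> (s (Suc i))))"
    by (rule telescope_norm) (use assms past_piece in \<open>fastforce simp: past_causal_curve_def\<close>)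
  then show ?thesis using sa sb sum_lessThan_telescope'[of "\<lambda>i. fst (\<beta> (s i))" k] by simp
qed


lemma seg_curve:
  fixes \<beta> :: "real \<Rightarrow> 'n::finite mpoint"
  assumes ab: "a < b" and eq: "\<And>x. x \<in> {a..b} \<Longrightarrow> \<beta> x = c + (x - a) *\<^sub>R v"
    and Pv: "v = 0 \<or> P v"
  shows "smooth_curve_with P a b \<beta>"
proof -
  have lin: "(\<beta> has_vector_derivative v) (at x within {a..b})" if x: "x \<in> {a..b}" for x
  proof -
    have "((\<lambda>y. c + (y - a) *\<^sub>R v) has_vector_derivative v) (at x within {a..b})"
      by (auto intro!: derivative_eq_intros)
    then show ?thesis
      by (rule has_vector_derivative_transform_within[where d=1]) (use x eq in auto)
  qed
  define D where "D = (\<lambda>k::nat. if k = 0 then \<beta> else if k = 1 then (\<lambda>_::real. v) else (\<lambda>_. 0))"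
  have sm: "smooth_on_ivl a b \<beta>"
    unfolding smooth_on_ivl_def
  proof (intro exI[of _ D] conjI ballI allI)
    show "D 0 = \<beta>" by (simp add: D_def)
    fix k x assume x: "x \<in> {a..b}"
    show "(D k has_vector_derivative D (Suc k) x) (at x within {a..b})"
      by (cases "k = 0"; cases "k = 1") (use lin x in \<open>auto simp: D_def\<close>)
  qed
  show ?thesis
    using Pv
  proof
    assume v0: "v = 0"
    have "\<forall>x\<in>{a..b}. \<beta> x = \<beta> a"
    proof
      fix x assume "x \<in> {a..b}"
      then show "\<beta> x = \<beta> a" using eq[of x] eq[of a] ab v0 by simp
    qed
    then show ?thesis using ab sm unfolding smooth_curve_with_def by blast
  next
    assume Pv: "P v"
    have "\<forall>x\<in>{a..b}. \<forall>w. (\<beta> has_vector_derivative w) (at x within {a..b}) \<longrightarrow> P w"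
    proof (intro ballI allI impI)
      fix x w assume x: "x \<in> {a..b}" and w: "(\<beta> has_vector_derivative w) (at x within {a..b})"
      have "w = v"
        using vector_derivative_unique_within_closed_interval[of a b x \<beta> w v] ab x w lin[OF x]
        by (simp add: cbox_interval)
      then show "P w" using Pv by simp
    qed
    then show ?thesis using ab sm unfolding smooth_curve_with_def by blast
  qed
qed

lemma fut_seg:
  fixes p q :: "'n::finite mpoint"
  assumes h: "norm (snd q - snd p) \<le> fst q - fst p"
  shows "future_causal_curve 0 1 (\<lambda>x. p + x *\<^sub>R (q - p)) real 1"
proof -
  have "q - p = 0 \<or> future_causal_vec (q - p)"
  proof (cases "fst q - fst p = 0")
    case True
    then have "snd q - snd p = 0" using h by simp
    then have "q - p = 0" using True by (simp add: prod_eq_iff)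
    then show ?thesis by simp
  next
    case False
    then have "fst q - fst p > 0" using h norm_ge_zero[of "snd q - snd p"] by linarith
    then show ?thesis using h by (auto simp: fut_iff)
  qed
  then have "smooth_curve_with future_causal_vec 0 1 (\<lambda>x. p + x *\<^sub>R (q - p))"
    by (intro seg_curve[where c = p and v = "q - p"]) auto
  then show ?thesis by (simp add: future_causal_curve_def is_partition_def)
qed

lemma past_seg:
  fixes p q :: "'n::finite mpoint"
  assumes h: "norm (snd q - snd p) \<le> - (fst q - fst p)"
  shows "past_causal_curve 0 1 (\<lambda>x. p + x *\<^sub>R (q - p)) real 1"
proof -
  have "q - p = 0 \<or> past_causal_vec (q - p)"
  proof (cases "fst q - fst p = 0")
    case True
    then have "snd q - snd p = 0" using h by simp
    then have "q - p = 0" using True by (simp add: prod_eq_iff)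
    then show ?thesis by simp
  next
    case False
    then have "fst q - fst p < 0" using h norm_ge_zero[of "snd q - snd p"] by linarith
    then show ?thesis using h by (auto simp: past_iff)
  qed
  then have "smooth_curve_with past_causal_vec 0 1 (\<lambda>x. p + x *\<^sub>R (q - p))"
    by (intro seg_curve[where c = p and v = "q - p"]) auto
  then show ?thesis by (simp add: past_causal_curve_def is_partition_def)
qed

lemma seg_length:
  "null_length fst (\<lambda>x. p + x *\<^sub>R (q - p)) real 1 = \<bar>fst q - fst p\<bar>"
  by (simp add: null_length_def)

lemma zigzag:
  fixes p q :: "'n::finite mpoint"
  assumes h: "\<bar>fst q - fst p\<bar> < norm (snd q - snd p)"
  shows "\<exists>\<beta>. piecewise_causal 0 2 \<beta> real 2 \<and> \<beta> 0 = p \<and> \<beta> 2 = q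
     \<and> null_length fst \<beta> real 2 = norm (snd q - snd p)"
proof -
  define w where "w = snd q - snd p"
  define Dn where "Dn = norm w"
  define dt where "dt = fst q - fst p"
  define \<alpha> where "\<alpha> = (Dn + dt)/2"
  define \<gamma> where "\<gamma> = (Dn - dt)/2"
  have Dpos: "Dn > 0" and ap: "\<alpha> > 0" and gp: "\<gamma> > 0"
    using h by (auto simp: Dn_def dt_def \<alpha>_def \<gamma>_def w_def)
  have sum: "\<alpha> + \<gamma> = Dn" and dif: "dt - \<alpha> = - \<gamma>"
    by (simp_all add: \<alpha>_def \<gamma>_def field_simps)
  define m where "m = p + (\<alpha>, (\<alpha>/Dn) *\<^sub>R w)"
  define \<beta> where "\<beta> = (\<lambda>x::real. if x \<le> 1 then p + x *\<^sub>R (m - p) else m + (x - 1) *\<^sub>R (q - m))"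
  have mp: "m - p = (\<alpha>, (\<alpha>/Dn) *\<^sub>R w)" by (simp add: m_def)
  have nmp: "norm ((\<alpha>/Dn) *\<^sub>R w) = \<alpha>" using Dpos ap by (simp add: Dn_def)
  have v1: "future_causal_vec (m - p)" using mp nmp ap by (simp add: fut_iff)
  have c1: "1 - \<alpha>/Dn = \<gamma>/Dn" using Dpos sum by (simp add: field_simps)
  have sqm: "snd (q - m) = (\<gamma>/Dn) *\<^sub>R w"
  proof -
    have "snd (q - m) = w - (\<alpha>/Dn) *\<^sub>R w" by (simp add: m_def w_def)
    also have "\<dots> = (1 - \<alpha>/Dn) *\<^sub>R w" by (simp add: scaleR_diff_left)
    finally show ?thesis using c1 by simp
  qed
  have fqm: "fst (q - m) = - \<gamma>" using dif by (simp add: m_def dt_def)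
  have nqm: "norm ((\<gamma>/Dn) *\<^sub>R w) = \<gamma>" using Dpos gp by (simp add: Dn_def)
  have v2: "past_causal_vec (q - m)" using sqm fqm nqm gp by (simp add: past_iff)
  have b0: "\<beta> 0 = p" and b1: "\<beta> 1 = m" and b2: "\<beta> 2 = q" by (simp_all add: \<beta>_def)
  have s1: "smooth_curve_with future_causal_vec 0 1 \<beta>"
    by (rule seg_curve[where c = p and v = "m - p"]) (use v1 in \<open>auto simp: \<beta>_def\<close>)
  have s2: "smooth_curve_with past_causal_vec 1 2 \<beta>"
  proof (rule seg_curve[where c = m and v = "q - m"])
    fix x :: real assume x: "x \<in> {1..2}"
    show "\<beta> x = m + (x - 1) *\<^sub>R (q - m)"
    proof (cases "x \<le> 1")
      case True
      then have "x = 1" using x by simp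
      then show ?thesis by (simp add: \<beta>_def)
    qed (simp add: \<beta>_def)
  qed (use v2 in auto)
  have pw: "piecewise_causal 0 2 \<beta> real 2"
    unfolding piecewise_causal_def is_partition_def
  proof (intro conjI allI impI)
    fix i :: nat assume "i < 2"
    then have "i = 0 \<or> i = 1" by auto
    then show "smooth_curve_with future_causal_vec (real i) (real (Suc i)) \<beta> \<or>
          smooth_curve_with past_causal_vec (real i) (real (Suc i)) \<beta>"
      using s1 s2 by auto
  qed auto
  have "null_length fst \<beta> real 2 = \<bar>fst (\<beta> 1) - fst (\<beta> 0)\<bar> + \<bar>fst (\<beta> 2) - fst (\<beta> 1)\<bar>"
    by (simp add: null_length_def numeral_2_eq_2)
  also have "\<dots> = \<alpha> + \<gamma>"
  proof -
    have "fst m - fst p = \<alpha>" by (simp add: m_def)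
    then show ?thesis using b0 b1 b2 fqm ap gp by simp
  qed
  finally have "null_length fst \<beta> real 2 = norm (snd q - snd p)"
    using sum by (simp add: Dn_def w_def)
  then show ?thesis using pw b0 b2 by blast
qed


lemma exists_curve:
  fixes p q :: "'n::finite mpoint"
  shows "\<exists>a b \<beta> s k. max \<bar>fst q - fst p\<bar> (norm (snd q - snd p)) = null_length fst \<beta> s k
      \<and> piecewise_causal a b \<beta> s k \<and> \<beta> a = p \<and> \<beta> b = q"
proof -
  consider (f) "norm (snd q - snd p) \<le> fst q - fst p" | (b) "norm (snd q - snd p) \<le> - (fst q - fst p)"
    | (z) "\<bar>fst q - fst p\<bar> < norm (snd q - snd p)" by linarith
  then show ?thesis
  proof cases
    case f
    have "piecewise_causal 0 1 (\<lambda>x. p + x *\<^sub>R (q - p)) real 1"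
      using fut_seg[OF f] by (simp add: future_causal_curve_def piecewise_causal_def)
    moreover have "max \<bar>fst q - fst p\<bar> (norm (snd q - snd p)) = \<bar>fst q - fst p\<bar>" using f by simp
    ultimately show ?thesis using seg_length[of p q]
      by (intro exI[of _ 0] exI[of _ 1] exI[of _ "\<lambda>x. p + x *\<^sub>R (q - p)"] exI[of _ real] exI[of _ 1]) simp
  next
    case b
    have "piecewise_causal 0 1 (\<lambda>x. p + x *\<^sub>R (q - p)) real 1"
      using past_seg[OF b] by (simp add: past_causal_curve_def piecewise_causal_def)
    moreover have "max \<bar>fst q - fst p\<bar> (norm (snd q - snd p)) = \<bar>fst q - fst p\<bar>" using b by simp
    ultimately show ?thesis using seg_length[of p q]
      by (intro exI[of _ 0] exI[of _ 1] exI[of _ "\<lambda>x. p + x *\<^sub>R (q - p)"] exI[of _ real] exI[of _ 1]) simp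
  next
    case z
    then obtain \<beta> where "piecewise_causal 0 2 \<beta> real 2" "\<beta> 0 = p" "\<beta> 2 = q"
      "null_length fst \<beta> real 2 = norm (snd q - snd p)" using zigzag by blast
    moreover have "max \<bar>fst q - fst p\<bar> (norm (snd q - snd p)) = norm (snd q - snd p)" using z by simp
    ultimately show ?thesis by metis
  qed
qed

lemma nd_formula:
  fixes p q :: "'n::finite mpoint"
  shows "null_dist fst p q = max \<bar>fst q - fst p\<bar> (norm (snd q - snd p))"
  unfolding null_dist_def
proof (rule cInf_eq_minimum)
  show "max \<bar>fst q - fst p\<bar> (norm (snd q - snd p)) \<in> {null_length fst \<beta> s k |a b \<beta> s k.
       piecewise_causal a b \<beta> s k \<and> \<beta> a = p \<and> \<beta> b = q}"
    using exists_curve[of q p] by blast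
next
  fix x assume "x \<in> {null_length fst \<beta> s k |a b \<beta> s k.
       piecewise_causal a b \<beta> s k \<and> \<beta> a = p \<and> (\<beta> b :: 'n mpoint) = q}"
  then obtain a b \<beta> s k where "x = null_length fst \<beta> s k" "piecewise_causal a b \<beta> s k"
    "\<beta> a = p" "\<beta> b = q" by blast
  then show "max \<bar>fst q - fst p\<bar> (norm (snd q - snd p)) \<le> x"
    using pw_bound[of a b \<beta> s k] by auto
qed

lemma Jp_iff:
  fixes p q :: "'n::finite mpoint"
  shows "q \<in> J_plus p \<longleftrightarrow> norm (snd q - snd p) \<le> fst q - fst p"
proof
  assume "q \<in> J_plus p"
  then obtain a b \<beta> s k where "future_causal_curve a b \<beta> s k" "\<beta> a = p" "\<beta> b = q"
    by (auto simp: J_plus_def)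
  then show "norm (snd q - snd p) \<le> fst q - fst p" using fut_curve_bound by blast
next
  assume "norm (snd q - snd p) \<le> fst q - fst p"
  from fut_seg[OF this] show "q \<in> J_plus p" unfolding J_plus_def
    by (intro CollectI exI[of _ 0] exI[of _ 1] exI[of _ "\<lambda>x. p + x *\<^sub>R (q - p)"] exI[of _ real] exI[of _ 1]) simp
qed

lemma Jm_iff:
  fixes p q :: "'n::finite mpoint"
  shows "q \<in> J_minus p \<longleftrightarrow> norm (snd q - snd p) \<le> - (fst q - fst p)"
proof
  assume "q \<in> J_minus p"
  then obtain a b \<beta> s k where "past_causal_curve a b \<beta> s k" "\<beta> a = p" "\<beta> b = q"
    by (auto simp: J_minus_def)
  then show "norm (snd q - snd p) \<le> - (fst q - fst p)" using past_curve_bound by blast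
next
  assume "norm (snd q - snd p) \<le> - (fst q - fst p)"
  from past_seg[OF this] show "q \<in> J_minus p" unfolding J_minus_def
    by (intro CollectI exI[of _ 0] exI[of _ 1] exI[of _ "\<lambda>x. p + x *\<^sub>R (q - p)"] exI[of _ real] exI[of _ 1]) simp
qed

theorem proposition3p3:
  fixes d :: "'n::finite mpoint \<Rightarrow> 'n mpoint \<Rightarrow> real"
  defines "d \<equiv> null_dist fst"
  shows "(\<forall>p q. d p q = 0 \<longleftrightarrow> p = q)
    \<and> (\<forall>p q. d p q = d q p)
    \<and> (\<forall>p q r. d p r \<le> d p q + d q r)
    \<and> (\<forall>p q v. d (p + v) (q + v) = d p q)
    \<and> (\<forall>p q. q \<in> J_plus p \<union> J_minus p \<longrightarrow> d p q = \<bar>fst q - fst p\<bar>)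
    \<and> (\<forall>p q. q \<notin> J_plus p \<union> J_minus p \<longrightarrow> d p q = norm (snd q - snd p))
    \<and> (\<forall>p q. causal_le p q \<longleftrightarrow> d p q = fst q - fst p)
    \<and> (\<forall>p r. {q. d p q = r} = {q. max \<bar>fst q - fst p\<bar> (norm (snd q - snd p)) = r})"
proof -
  have D: "\<And>p q. d p q = max \<bar>fst q - fst p\<bar> (norm (snd q - snd p))"
    unfolding d_def by (rule nd_formula)
  have 1: "\<forall>p q. d p q = 0 \<longleftrightarrow> p = q"
  proof (intro allI)
    fix p q :: "'n mpoint"
    have "max \<bar>fst q - fst p\<bar> (norm (snd q - snd p)) = 0 \<longleftrightarrow> fst q = fst p \<and> snd q = snd p"
      using norm_ge_zero[of "snd q - snd p"] by (auto simp: max_def)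
    then show "d p q = 0 \<longleftrightarrow> p = q" using D by (auto simp: prod_eq_iff)
  qed
  have 2: "\<forall>p q. d p q = d q p"
    using D by (simp add: norm_minus_commute abs_minus_commute)
  have 3: "\<forall>p q r. d p r \<le> d p q + d q r"
  proof (intro allI)
    fix p q r :: "'n mpoint"
    have a: "\<bar>fst r - fst p\<bar> \<le> \<bar>fst q - fst p\<bar> + \<bar>fst r - fst q\<bar>" by linarith
    have b: "norm (snd r - snd p) \<le> norm (snd q - snd p) + norm (snd r - snd q)"
      using norm_triangle_ineq[of "snd q - snd p" "snd r - snd q"] by simp
    show "d p r \<le> d p q + d q r" unfolding D using a b by linarith
  qed
  have 4: "\<forall>p q v. d (p + v) (q + v) = d p q" using D by simp
  have 5: "\<forall>p q. q \<in> J_plus p \<union> J_minus p \<longrightarrow> d p q = \<bar>fst q - fst p\<bar>"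
  proof (intro allI impI)
    fix p q :: "'n mpoint"
    assume "q \<in> J_plus p \<union> J_minus p"
    then have "norm (snd q - snd p) \<le> \<bar>fst q - fst p\<bar>" unfolding Un_iff Jp_iff Jm_iff by linarith
    then show "d p q = \<bar>fst q - fst p\<bar>" unfolding D by simp
  qed
  have 6: "\<forall>p q. q \<notin> J_plus p \<union> J_minus p \<longrightarrow> d p q = norm (snd q - snd p)"
  proof (intro allI impI)
    fix p q :: "'n mpoint"
    assume "q \<notin> J_plus p \<union> J_minus p"
    then have "\<bar>fst q - fst p\<bar> \<le> norm (snd q - snd p)" unfolding Un_iff Jp_iff Jm_iff by linarith
    then show "d p q = norm (snd q - snd p)" unfolding D by simp
  qed
  have 7: "\<forall>p q. causal_le p q \<longleftrightarrow> d p q = fst q - fst p"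
  proof (intro allI)
    fix p q :: "'n mpoint"
    show "causal_le p q \<longleftrightarrow> d p q = fst q - fst p"
      unfolding causal_le_def Jp_iff D using norm_ge_zero[of "snd q - snd p"]
      by (smt (verit))
  qed
  have 8: "\<forall>p r. {q. d p q = r} = {q. max \<bar>fst q - fst p\<bar> (norm (snd q - snd p)) = r}"
    using D by simp
  show ?thesis using 1 2 3 4 5 6 7 8 by blast
qed

end
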